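(* Assume $(a,b,c)\neq(0,0,0)$. (i) If $\sigma<\mu<a_1$, then $|e_{2\sigma}|<|e_{2\mu}|$. (ii) If $\sigma,\mu>0$, $\sigma,\mu\notin\{a_1,a_2,a_3\}$, $(\mu/\sigma)^2>a_3/a_1$ and $H(e_{2\sigma})=H(e_{2\mu})$, then $|e_{2\sigma}|>|e_{2\mu}|$. (iii) If $0<\sigma<a_1<a_3<\mu$ and $H(e_{2\sigma})=H(e_{2\mu})$, then $|e_{2\sigma}|>|e_{2\mu}|$.
   Context: Fix constants $0<a_1<a_2<a_3$ and $a,b,c\in\mathbb R$. For $\lambda\in\mathbb R\setminus\{a_1,a_2,a_3\}$ let $$e_{2\lambda}=\Big(\frac{a}{\lambda-a_1},\frac{b}{\lambda-a_2},\frac{c}{\lambda-a_3}\Big).$$ Let $$H(\mathbf x)=\tfrac12(a_1(x^1)^2+a_2(x^2)^2+a_3(x^3)^2)+ax^1+bx^2+cx^3,$$ and let $|\cdot|$ be the Euclidean norm on $\mathbb R^3$. *)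

theory Defs
  imports "HOL-Analysis.Analysis"
begin

definition e2 :: "real \<Rightarrow> real \<Rightarrow> real \<Rightarrow> real \<Rightarrow> real \<Rightarrow> real \<Rightarrow> real \<Rightarrow> real ^ 3" where
  "e2 a1 a2 a3 a b c l = vector [a / (l - a1), b / (l - a2), c / (l - a3)]"

definition H :: "real \<Rightarrow> real \<Rightarrow> real \<Rightarrow> real \<Rightarrow> real \<Rightarrow> real \<Rightarrow> real ^ 3 \<Rightarrow> real" where
  "H a1 a2 a3 a b c x =
     (a1 * (x $ 1)^2 + a2 * (x $ 2)^2 + a3 * (x $ 3)^2) / 2 + a * (x $ 1) + b * (x $ 2) + c * (x $ 3)"

end

theory Submission
  imports Defs
begin

lemma n2: "(norm (vector [p,q,r] :: real^3))^2 = p^2+q^2+r^2"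
  by (simp add: norm_vec_def L2_set_def sum_3 vector_3)

lemma Hv: "H a1 a2 a3 a b c (vector [p,q,r]) = (a1*p^2+a2*q^2+a3*r^2)/2 + a*p+b*q+c*r"
  by (simp add: H_def vector_3)

lemma comp_id:
  fixes k ai s m x y :: real
  assumes "(s - ai) * x = k" "(m - ai) * y = k"
  shows "2 * (ai*x^2/2 + k*x - (ai*y^2/2 + k*y)) = (s*x + m*y)*(x - y)"
  using assms by (auto simp: algebra_simps power2_eq_square)


lemma mono1:
  fixes k ai s m :: real
  assumes "s < m" "m < ai"
  shows "(k/(s-ai))^2 \<le> (k/(m-ai))^2" and "k \<noteq> 0 \<Longrightarrow> (k/(s-ai))^2 < (k/(m-ai))^2"
proof -
  have h: "(1/(s-ai))^2 < (1/(m-ai))^2"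
  proof -
    have "0 < ai - m" "ai - m < ai - s" using assms by auto
    hence "1/(ai-s) < 1/(ai-m)" by (simp add: frac_less2)
    moreover have "0 < 1/(ai-s)" using assms by simp
    ultimately have "(1/(ai-s))^2 < (1/(ai-m))^2" by (simp add: power_strict_mono)
    thus ?thesis by (simp add: power2_eq_square field_simps)
  qed
  have e: "\<And>t. (k/t)^2 = k^2 * (1/t)^2" by (simp add: power_divide)
  show "(k/(s-ai))^2 \<le> (k/(m-ai))^2" unfolding e using h
    by (simp add: mult_left_mono)
  show "k \<noteq> 0 \<Longrightarrow> (k/(s-ai))^2 < (k/(m-ai))^2" unfolding e using h by simp
qed

lemma lin: "(p1+p2+p3)/2 + q1+q2+q3 = (r1+r2+r3)/2 + t1+t2+t3 \<Longrightarrow>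
  2*(p1/2+q1-(r1/2+t1)) + 2*(p2/2+q2-(r2/2+t2)) + 2*(p3/2+q3-(r3/2+t3)) = (0::real)"
  by (simp add: field_simps)

lemma key:
  fixes s m x1 x2 x3 y1 y2 y3 :: real
  assumes "0 < s" "s < m"
    and "(x1 - y1)^2 + (x2 - y2)^2 + (x3 - y3)^2 > 0"
    and "s*(x1^2+x2^2+x3^2) + (m - s)*(x1*y1+x2*y2+x3*y3) = m*(y1^2+y2^2+y3^2)"
  shows "y1^2+y2^2+y3^2 < x1^2+x2^2+x3^2"
proof -
  define Nx where "Nx = x1^2+x2^2+x3^2"
  define Ny where "Ny = y1^2+y2^2+y3^2"
  define P where "P = x1*y1+x2*y2+x3*y3"
  have p: "2*P < Nx + Ny" using assms(3) unfolding Nx_def Ny_def P_def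
    by (simp add: power2_eq_square algebra_simps)
  have eq: "s*Nx + (m-s)*P = m*Ny" using assms(4) unfolding Nx_def Ny_def P_def .
  have "(m-s)*(2*P) < (m-s)*(Nx+Ny)" using p assms by simp
  hence "(m+s)*Ny < (m+s)*Nx" using eq by (simp add: algebra_simps)
  hence "Ny < Nx" using assms by (simp add: mult_less_cancel_left)
  thus ?thesis unfolding Nx_def Ny_def .
qed

lemma part2:
  fixes a1 a2 a3 a b c s m :: real
  assumes "(a, b, c) \<noteq> (0, 0, 0)" "0 < s" "s < m"
    and "s \<notin> {a1,a2,a3}" "m \<notin> {a1,a2,a3}"
    and "H a1 a2 a3 a b c (e2 a1 a2 a3 a b c s) = H a1 a2 a3 a b c (e2 a1 a2 a3 a b c m)"
  shows "norm (e2 a1 a2 a3 a b c s) > norm (e2 a1 a2 a3 a b c m)"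
proof -
  define x1 where "x1 = a/(s-a1)"
  define x2 where "x2 = b/(s-a2)"
  define x3 where "x3 = c/(s-a3)"
  define y1 where "y1 = a/(m-a1)"
  define y2 where "y2 = b/(m-a2)"
  define y3 where "y3 = c/(m-a3)"
  have ne: "s \<noteq> a1" "s \<noteq> a2" "s \<noteq> a3" "m \<noteq> a1" "m \<noteq> a2" "m \<noteq> a3" using assms by auto
  have c1: "2 * (a1*x1^2/2 + a*x1 - (a1*y1^2/2 + a*y1)) = (s*x1 + m*y1)*(x1 - y1)"
    by (rule comp_id) (simp_all add: x1_def y1_def ne)
  have c2: "2 * (a2*x2^2/2 + b*x2 - (a2*y2^2/2 + b*y2)) = (s*x2 + m*y2)*(x2 - y2)"
    by (rule comp_id) (simp_all add: x2_def y2_def ne)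
  have c3: "2 * (a3*x3^2/2 + c*x3 - (a3*y3^2/2 + c*y3)) = (s*x3 + m*y3)*(x3 - y3)"
    by (rule comp_id) (simp_all add: x3_def y3_def ne)
  have Heq: "(a1*x1^2+a2*x2^2+a3*x3^2)/2 + a*x1+b*x2+c*x3 = (a1*y1^2+a2*y2^2+a3*y3^2)/2 + a*y1+b*y2+c*y3"
    using assms(6) by (simp add: e2_def Hv x1_def x2_def x3_def y1_def y2_def y3_def)
  have sumeq: "(s*x1 + m*y1)*(x1 - y1) + (s*x2 + m*y2)*(x2 - y2) + (s*x3 + m*y3)*(x3 - y3) = 0"
    unfolding c1[symmetric] c2[symmetric] c3[symmetric] by (rule lin[OF Heq])
  have eq: "s*(x1^2+x2^2+x3^2) + (m - s)*(x1*y1+x2*y2+x3*y3) = m*(y1^2+y2^2+y3^2)"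
    using sumeq by (simp add: algebra_simps power2_eq_square)
  have diff: "x1 \<noteq> y1 \<or> x2 \<noteq> y2 \<or> x3 \<noteq> y3"
  proof -
    have "\<And>k ai. k \<noteq> 0 \<Longrightarrow> s \<noteq> ai \<Longrightarrow> m \<noteq> ai \<Longrightarrow> k/(s-ai) \<noteq> k/(m-ai)"
      using assms(3) by (simp add: divide_simps)
    thus ?thesis using assms(1) ne unfolding x1_def x2_def x3_def y1_def y2_def y3_def by auto
  qed
  have pos: "(x1 - y1)^2 + (x2 - y2)^2 + (x3 - y3)^2 > 0"
  proof -
    have q: "(x1 - y1)^2 > 0 \<or> (x2-y2)^2>0 \<or> (x3-y3)^2>0" using diff by auto
    have "(x1 - y1)^2 \<ge> 0" "(x2 - y2)^2 \<ge> 0" "(x3 - y3)^2 \<ge> 0" by simp_all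
    thus ?thesis using q by linarith
  qed
  have "y1^2+y2^2+y3^2 < x1^2+x2^2+x3^2" by (rule key[OF assms(2,3) pos eq])
  hence "(norm (e2 a1 a2 a3 a b c m))^2 < (norm (e2 a1 a2 a3 a b c s))^2"
    by (simp add: e2_def n2 x1_def x2_def x3_def y1_def y2_def y3_def)
  thus ?thesis by (simp add: power_less_imp_less_base)
qed

theorem lemma6p1:
  fixes a1 a2 a3 a b c :: real
  assumes "0 < a1" and "a1 < a2" and "a2 < a3"
    and "(a, b, c) \<noteq> (0, 0, 0)"
  shows "(\<forall>\<sigma> \<mu>. \<sigma> < \<mu> \<and> \<mu> < a1 \<longrightarrow>
            norm (e2 a1 a2 a3 a b c \<sigma>) < norm (e2 a1 a2 a3 a b c \<mu>))
       \<and> (\<forall>\<sigma> \<mu>. 0 < \<sigma> \<and> 0 < \<mu> \<and> \<sigma> \<notin> {a1, a2, a3} \<and> \<mu> \<notin> {a1, a2, a3}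
            \<and> (\<mu> / \<sigma>)^2 > a3 / a1
            \<and> H a1 a2 a3 a b c (e2 a1 a2 a3 a b c \<sigma>) = H a1 a2 a3 a b c (e2 a1 a2 a3 a b c \<mu>)
            \<longrightarrow> norm (e2 a1 a2 a3 a b c \<sigma>) > norm (e2 a1 a2 a3 a b c \<mu>))
       \<and> (\<forall>\<sigma> \<mu>. 0 < \<sigma> \<and> \<sigma> < a1 \<and> a3 < \<mu>
            \<and> H a1 a2 a3 a b c (e2 a1 a2 a3 a b c \<sigma>) = H a1 a2 a3 a b c (e2 a1 a2 a3 a b c \<mu>)
            \<longrightarrow> norm (e2 a1 a2 a3 a b c \<sigma>) > norm (e2 a1 a2 a3 a b c \<mu>))"
proof (intro conjI allI impI)
  fix s m assume h: "s < m \<and> m < a1"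
  have m2: "m < a2" "m < a3" using h assms by auto
  note A = mono1[OF conjunct1[OF h] conjunct2[OF h], of a]
  note B = mono1[OF conjunct1[OF h] m2(1), of b]
  note C = mono1[OF conjunct1[OF h] m2(2), of c]
  have "(a/(s-a1))^2 + (b/(s-a2))^2 + (c/(s-a3))^2 < (a/(m-a1))^2 + (b/(m-a2))^2 + (c/(m-a3))^2"
  proof (cases "a \<noteq> 0")
    case True thus ?thesis using A B C by (meson add_less_le_mono add_mono)
  next
    case False
    show ?thesis
    proof (cases "b \<noteq> 0")
      case True thus ?thesis using A B C by (meson add_le_less_mono add_less_le_mono)
    next
      case False
      hence "c \<noteq> 0" using \<open>\<not> a \<noteq> 0\<close> assms(4) by auto
      thus ?thesis using A B C by (meson add_le_less_mono add_mono)
    qed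
  qed
  hence "(norm (e2 a1 a2 a3 a b c s))^2 < (norm (e2 a1 a2 a3 a b c m))^2"
    by (simp add: e2_def n2)
  thus "norm (e2 a1 a2 a3 a b c s) < norm (e2 a1 a2 a3 a b c m)"
    by (simp add: power_less_imp_less_base)
next
  fix s m assume h: "0 < s \<and> 0 < m \<and> s \<notin> {a1, a2, a3} \<and> m \<notin> {a1, a2, a3}
            \<and> (m / s)^2 > a3 / a1
            \<and> H a1 a2 a3 a b c (e2 a1 a2 a3 a b c s) = H a1 a2 a3 a b c (e2 a1 a2 a3 a b c m)"
  have "1 < a3/a1" using assms by simp
  hence "1 < (m/s)^2" using h by linarith
  hence "1 < m/s" using h by (smt (verit) one_power2 power_mono divide_pos_pos)
  hence "s < m" using h by (simp add: less_divide_eq)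
  thus "norm (e2 a1 a2 a3 a b c s) > norm (e2 a1 a2 a3 a b c m)"
    using part2[OF assms(4)] h by blast
next
  fix s m assume h: "0 < s \<and> s < a1 \<and> a3 < m
            \<and> H a1 a2 a3 a b c (e2 a1 a2 a3 a b c s) = H a1 a2 a3 a b c (e2 a1 a2 a3 a b c m)"
  have "s \<notin> {a1,a2,a3}" "m \<notin> {a1,a2,a3}" "s < m" using h assms by auto
  thus "norm (e2 a1 a2 a3 a b c s) > norm (e2 a1 a2 a3 a b c m)"
    using part2[OF assms(4)] h by blast
qed

end
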